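(* Fix a nonreal $z\in\mathbb C$ and let $v$ be a nonzero function on $\Gamma$ with $Jv=zv$ at every vertex (such $v$ exists and is unique up to a constant multiple). Then $J$ with domain $\mathcal F(\Gamma)$ is essentially selfadjoint in $\ell^2(\Gamma)$ if and only if $v\notin\ell^2(\Gamma)$.
   Context: Let $\Gamma$ be an infinite connected tree whose vertices are arranged in levels $\ell(x)\in\{0,1,2,\dots\}$: every vertex $x$ is adjacent to exactly one vertex $x'$ with $\ell(x')=\ell(x)+1$; for $\ell(x)\ge 1$ the set $N_x=\{y:\ y'=x\}$ of neighbours of $x$ on level $\ell(x)-1$ is finite and nonempty; $N_x=\emptyset$ if $\ell(x)=0$; there are no other edges. Fix $\lambda_x>0$, $\beta_x\in\mathbb R$ for $x\in\Gamma$. The Jacobi matrix $J$ acts on functions $v:\Gamma\to\mathbb C$ by $(Jv)(x)=\lambda_x v(x')+\beta_x v(x)+\sum_{y\in N_x}\lambda_y v(y)$. $\mathcal F(\Gamma)$ denotes the finitely supported functions on $\Gamma$; $J$ with domain $\mathcal F(\Gamma)$ is a symmetric operator in $\ell^2(\Gamma)$. *)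

theory Defs
  imports "HOL-Analysis.Analysis"
begin

text \<open>Vertices of the tree are the elements of the type 'a. par x is the unique
neighbour x' on the next level, lev x is the level. The edges are exactly the pairs
{x, par x}.\<close>

definition children :: "('a \<Rightarrow> 'a) \<Rightarrow> 'a \<Rightarrow> 'a set" where
  "children par x = {y. par y = x}"

definition level_tree :: "('a \<Rightarrow> 'a) \<Rightarrow> ('a \<Rightarrow> nat) \<Rightarrow> bool" where
  "level_tree par lev \<longleftrightarrow>
     infinite (UNIV :: 'a set) \<and>
     (\<forall>x. lev (par x) = lev x + 1) \<and>
     (\<forall>x. lev x \<ge> 1 \<longrightarrow> finite (children par x) \<and> children par x \<noteq> {}) \<and>
     (\<forall>x. lev x = 0 \<longrightarrow> children par x = {}) \<and>
     (\<forall>x y. \<exists>n m. (par ^^ n) x = (par ^^ m) y)"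

definition jacobi :: "('a \<Rightarrow> 'a) \<Rightarrow> ('a \<Rightarrow> real) \<Rightarrow> ('a \<Rightarrow> real) \<Rightarrow> ('a \<Rightarrow> complex) \<Rightarrow> ('a \<Rightarrow> complex)" where
  "jacobi par lam bet v = (\<lambda>x. complex_of_real (lam x) * v (par x) + complex_of_real (bet x) * v x
      + (\<Sum>y\<in>children par x. complex_of_real (lam y) * v y))"

definition l2 :: "('a \<Rightarrow> complex) \<Rightarrow> bool" where
  "l2 f \<longleftrightarrow> (\<lambda>x. (cmod (f x))\<^sup>2) summable_on UNIV"

definition l2_norm :: "('a \<Rightarrow> complex) \<Rightarrow> real" where
  "l2_norm f = sqrt (\<Sum>\<^sub>\<infinity>x. (cmod (f x))\<^sup>2)"

definition l2_inner :: "('a \<Rightarrow> complex) \<Rightarrow> ('a \<Rightarrow> complex) \<Rightarrow> complex" where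
  "l2_inner f g = (\<Sum>\<^sub>\<infinity>x. f x * cnj (g x))"

definition fin_supp :: "('a \<Rightarrow> complex) \<Rightarrow> bool" where
  "fin_supp f \<longleftrightarrow> finite {x. f x \<noteq> 0}"

text \<open>Operators in l2 are represented by their graphs (sets of pairs (f, Af)).\<close>
definition jacobi_graph :: "('a \<Rightarrow> 'a) \<Rightarrow> ('a \<Rightarrow> real) \<Rightarrow> ('a \<Rightarrow> real) \<Rightarrow> (('a \<Rightarrow> complex) \<times> ('a \<Rightarrow> complex)) set" where
  "jacobi_graph par lam bet = {(f, jacobi par lam bet f) | f. fin_supp f}"

definition op_adjoint :: "(('a \<Rightarrow> complex) \<times> ('a \<Rightarrow> complex)) set \<Rightarrow> (('a \<Rightarrow> complex) \<times> ('a \<Rightarrow> complex)) set" where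
  "op_adjoint G = {(u, w). l2 u \<and> l2 w \<and> (\<forall>(f, g)\<in>G. l2_inner g u = l2_inner f w)}"

definition op_closure :: "(('a \<Rightarrow> complex) \<times> ('a \<Rightarrow> complex)) set \<Rightarrow> (('a \<Rightarrow> complex) \<times> ('a \<Rightarrow> complex)) set" where
  "op_closure G = {(u, w). l2 u \<and> l2 w \<and> (\<exists>F W. (\<forall>n. (F n, W n) \<in> G) \<and>
      (\<lambda>n. l2_norm (F n - u)) \<longlonglongrightarrow> 0 \<and> (\<lambda>n. l2_norm (W n - w)) \<longlonglongrightarrow> 0)}"

definition self_adjoint_op :: "(('a \<Rightarrow> complex) \<times> ('a \<Rightarrow> complex)) set \<Rightarrow> bool" where
  "self_adjoint_op G \<longleftrightarrow> op_adjoint G = G"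

definition ess_self_adjoint :: "(('a \<Rightarrow> complex) \<times> ('a \<Rightarrow> complex)) set \<Rightarrow> bool" where
  "ess_self_adjoint G \<longleftrightarrow> self_adjoint_op (op_closure G)"

end

theory Submission
  imports Defs
begin

lemma sq_add_le: "(cmod (a + b))\<^sup>2 \<le> 2 * (cmod a)\<^sup>2 + 2 * (cmod b)\<^sup>2"
proof -
  have "cmod (a+b) \<le> cmod a + cmod b" by (rule norm_triangle_ineq)
  hence "(cmod (a+b))\<^sup>2 \<le> (cmod a + cmod b)\<^sup>2" by (simp add: power_mono)
  also have "\<dots> \<le> 2 * (cmod a)\<^sup>2 + 2 * (cmod b)\<^sup>2"
  proof -
    have "0 \<le> (cmod a - cmod b)\<^sup>2" by simp
    thus ?thesis unfolding power2_diff power2_sum by linarith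
  qed
  finally show ?thesis .
qed

lemma l2_add: "l2 f \<Longrightarrow> l2 g \<Longrightarrow> l2 (\<lambda>x. f x + g x)"
  unfolding l2_def
  apply (rule summable_on_comparison_test[where f="\<lambda>x. 2 * (cmod (f x))\<^sup>2 + 2 * (cmod (g x))\<^sup>2"])
  by (auto intro!: summable_on_add summable_on_cmult_right sq_add_le)

lemma l2_scale: "l2 f \<Longrightarrow> l2 (\<lambda>x. c * f x)"
  unfolding l2_def by (simp add: norm_mult power_mult_distrib summable_on_cmult_right)

lemma l2_uminus: "l2 f \<Longrightarrow> l2 (\<lambda>x. - f x)"
  unfolding l2_def by simp

lemma l2_diff: "l2 f \<Longrightarrow> l2 g \<Longrightarrow> l2 (\<lambda>x. f x - g x)"
  using l2_add[of f "\<lambda>x. - g x"] l2_uminus[of g] by simp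

lemma l2_cnj: "l2 f \<Longrightarrow> l2 (\<lambda>x. cnj (f x))"
  unfolding l2_def by simp

lemma l2_zero: "l2 (\<lambda>_. 0)"
  unfolding l2_def by simp

lemma fin_supp_l2: "fin_supp f \<Longrightarrow> l2 f"
  unfolding l2_def fin_supp_def
  by (rule summable_on_cong_neutral[where T="{x. f x \<noteq> 0}" and f="\<lambda>x. (cmod (f x))\<^sup>2", THEN iffD2]) auto

lemma fin_supp_prod_summable: "fin_supp f \<Longrightarrow> (\<lambda>x. f x * g x) summable_on UNIV"
  unfolding fin_supp_def
  by (rule summable_on_cong_neutral[where T="{x. f x \<noteq> 0}", THEN iffD2]) auto

lemma fin_supp_infsum: "fin_supp f \<Longrightarrow> infsum (\<lambda>x. f x * g x) UNIV = (\<Sum>x\<in>{x. f x \<noteq> 0}. f x * g x)"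
  unfolding fin_supp_def
  by (subst infsum_cong_neutral[where T="{x. f x \<noteq> 0}" and g="\<lambda>x. f x * g x"]) auto

lemma prod_le: "cmod (a * cnj b) \<le> ((cmod a)\<^sup>2 + (cmod b)\<^sup>2) / 2"
proof -
  have "2 * (cmod a * cmod b) \<le> (cmod a)\<^sup>2 + (cmod b)\<^sup>2"
  proof -
    have "0 \<le> (cmod a - cmod b)\<^sup>2" by simp
    thus ?thesis unfolding power2_diff by linarith
  qed
  thus ?thesis by (simp add: norm_mult)
qed

lemma l2_prod_abs: "l2 f \<Longrightarrow> l2 g \<Longrightarrow> (\<lambda>x. cmod (f x * cnj (g x))) summable_on UNIV"
proof -
  assume f: "l2 f" and g: "l2 g"
  have "(\<lambda>x. (cmod (f x))\<^sup>2 + (cmod (g x))\<^sup>2) summable_on UNIV"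
    using f g unfolding l2_def by (rule summable_on_add)
  hence s: "(\<lambda>x. ((cmod (f x))\<^sup>2 + (cmod (g x))\<^sup>2) * (1/2)) summable_on UNIV"
    by (rule summable_on_cmult_left)
  show ?thesis
    by (rule summable_on_comparison_test[OF s]) (use prod_le in auto)
qed

lemma l2_prod: "l2 f \<Longrightarrow> l2 g \<Longrightarrow> (\<lambda>x. f x * cnj (g x)) summable_on UNIV"
  using l2_prod_abs summable_on_iff_abs_summable_on_complex by blast


typedef 'a ell2 = "{f :: 'a \<Rightarrow> complex. l2 f}"
  using l2_zero by blast

setup_lifting type_definition_ell2

instantiation ell2 :: (type) real_vector
begin
lift_definition zero_ell2 :: "'a ell2" is "\<lambda>_. 0" by (simp add: l2_zero)
lift_definition plus_ell2 :: "'a ell2 \<Rightarrow> 'a ell2 \<Rightarrow> 'a ell2" is "\<lambda>f g x. f x + g x" by (simp add: l2_add)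
lift_definition minus_ell2 :: "'a ell2 \<Rightarrow> 'a ell2 \<Rightarrow> 'a ell2" is "\<lambda>f g x. f x - g x" by (simp add: l2_diff)
lift_definition uminus_ell2 :: "'a ell2 \<Rightarrow> 'a ell2" is "\<lambda>f x. - f x" by (simp add: l2_uminus)
lift_definition scaleR_ell2 :: "real \<Rightarrow> 'a ell2 \<Rightarrow> 'a ell2" is "\<lambda>r f x. complex_of_real r * f x" by (simp add: l2_scale)
instance
proof
  fix a b c :: "'a ell2" and r s :: real
  show "a + b + c = a + (b + c)" by transfer (simp add: add.assoc)
  show "a + b = b + a" by transfer (simp add: add.commute)
  show "0 + a = a" by transfer simp
  show "- a + a = 0" by transfer simp
  show "a - b = a + - b" by transfer simp
  show "r *\<^sub>R (a + b) = r *\<^sub>R a + r *\<^sub>R b" by transfer (simp add: distrib_left)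
  show "(r + s) *\<^sub>R a = r *\<^sub>R a + s *\<^sub>R a" by transfer (simp add: distrib_right)
  show "r *\<^sub>R s *\<^sub>R a = (r * s) *\<^sub>R a" by transfer (simp add: mult.assoc)
  show "1 *\<^sub>R a = a" by transfer simp
qed
end

lemma l2_inner_sym: "infsum (\<lambda>x. g x * cnj (f x)) UNIV = cnj (infsum (\<lambda>x. f x * cnj (g x)) UNIV)"
  by (subst infsum_cnj[symmetric]) (simp add: mult.commute)

lemma infsum_of_real_c: "infsum (\<lambda>x. complex_of_real (f x)) A = complex_of_real (infsum f A)"
proof (cases "f summable_on A")
  case True thus ?thesis by (metis has_sum_of_real has_sum_infsum infsumI)
next
  case False
  hence "\<not> (\<lambda>x. complex_of_real (f x)) summable_on A"
    using summable_on_Re[of "\<lambda>x. complex_of_real (f x)" A] by auto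
  thus ?thesis using False by (simp add: infsum_not_exists)
qed

lemma l2_self: "infsum (\<lambda>x. f x * cnj (f x)) UNIV = complex_of_real (infsum (\<lambda>x. (cmod (f x))\<^sup>2) UNIV)"
proof -
  have eq: "(\<lambda>x. f x * cnj (f x)) = (\<lambda>x. complex_of_real ((cmod (f x))\<^sup>2))"
    by (auto simp: complex_mult_cnj cmod_power2)
  show ?thesis unfolding eq by (rule infsum_of_real_c)
qed

instantiation ell2 :: (type) real_inner
begin
lift_definition inner_ell2 :: "'a ell2 \<Rightarrow> 'a ell2 \<Rightarrow> real" is
  "\<lambda>f g. Re (infsum (\<lambda>x. f x * cnj (g x)) UNIV)" .
definition norm_ell2 :: "'a ell2 \<Rightarrow> real" where "norm_ell2 x = sqrt (inner x x)"
definition dist_ell2 :: "'a ell2 \<Rightarrow> 'a ell2 \<Rightarrow> real" where "dist_ell2 x y = norm (x - y)"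
definition sgn_ell2 :: "'a ell2 \<Rightarrow> 'a ell2" where "sgn_ell2 x = x /\<^sub>R norm x"
definition uniformity_ell2 :: "('a ell2 \<times> 'a ell2) filter"
  where "uniformity_ell2 = (INF e\<in>{0 <..}. principal {(x, y). dist x y < e})"
definition open_ell2 :: "'a ell2 set \<Rightarrow> bool"
  where "open_ell2 S = (\<forall>x\<in>S. \<forall>\<^sub>F (x', y) in uniformity. x' = x \<longrightarrow> y \<in> S)"
instance
proof
  fix x y z :: "'a ell2" and r :: real
  show "dist x y = norm (x - y)" by (simp add: dist_ell2_def)
  show "sgn x = x /\<^sub>R norm x" by (simp add: sgn_ell2_def)
  show "(uniformity :: ('a ell2 \<times> 'a ell2) filter) = (INF e\<in>{0 <..}. principal {(x, y). dist x y < e})"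
    by (simp add: uniformity_ell2_def)
  show "open U = (\<forall>x\<in>U. \<forall>\<^sub>F (x', y) in uniformity. x' = x \<longrightarrow> y \<in> U)" for U :: "'a ell2 set"
    by (simp add: open_ell2_def)
  show "inner x y = inner y x"
    by transfer (subst l2_inner_sym, simp)
  show "inner (x + y) z = inner x z + inner y z"
    by transfer (simp add: distrib_right infsum_add l2_prod)
  show "inner (r *\<^sub>R x) y = r * inner x y"
    apply transfer
    apply (simp add: mult.assoc)
    apply (subst infsum_cmult_right)
    by (auto simp: l2_prod)
  show "0 \<le> inner x x"
    by transfer (simp add: l2_self infsum_nonneg)
  show "(inner x x = 0) = (x = 0)"
  proof
    assume "inner x x = 0"
    thus "x = 0"
    proof transfer
      fix f :: "'a \<Rightarrow> complex" assume f: "l2 f" and "Re (\<Sum>\<^sub>\<infinity>x. f x * cnj (f x)) = 0"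
      hence s: "infsum (\<lambda>x. (cmod (f x))\<^sup>2) UNIV \<le> 0" by (simp add: l2_self)
      have "(cmod (f x))\<^sup>2 = 0" for x
        using nonneg_infsum_le_0D[OF s] f unfolding l2_def by (simp add: less_le)
      thus "f = (\<lambda>_. 0)" by auto
    qed
  qed (transfer, simp)
  show "norm x = sqrt (inner x x)" by (simp add: norm_ell2_def)
qed
end

lemma inner_ell2_Abs: "l2 f \<Longrightarrow> l2 g \<Longrightarrow> inner (Abs_ell2 f) (Abs_ell2 g) = Re (l2_inner f g)"
  by (simp add: inner_ell2.rep_eq Abs_ell2_inverse l2_inner_def)

lemma norm_ell2_Abs: "l2 f \<Longrightarrow> norm (Abs_ell2 f) = l2_norm f"
  by (simp add: norm_ell2_def inner_ell2_Abs l2_inner_def l2_norm_def l2_self)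

lemma Rep_l2: "l2 (Rep_ell2 x)" using Rep_ell2 by simp

lemma norm_Rep: "norm x = l2_norm (Rep_ell2 x)"
  using norm_ell2_Abs[OF Rep_l2[of x]] by (simp add: Rep_ell2_inverse)


lemma partial_le: "l2 h \<Longrightarrow> finite F \<Longrightarrow> (\<Sum>x\<in>F. (cmod (h x))\<^sup>2) \<le> infsum (\<lambda>x. (cmod (h x))\<^sup>2) UNIV"
  unfolding l2_def
  by (subst infsum_finite[symmetric], assumption, rule infsum_mono_neutral) auto

lemma bounded_l2:
  assumes "\<And>F. finite F \<Longrightarrow> (\<Sum>x\<in>F. (cmod (h x))\<^sup>2) \<le> B"
  shows "l2 h" "infsum (\<lambda>x. (cmod (h x))\<^sup>2) UNIV \<le> B"
proof -
  show "l2 h" unfolding l2_def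
    by (rule nonneg_bdd_above_summable_on) (use assms in \<open>auto simp: bdd_above_def\<close>)
  thus "infsum (\<lambda>x. (cmod (h x))\<^sup>2) UNIV \<le> B"
    unfolding l2_def by (rule infsum_le_finite_sums) (use assms in auto)
qed

lemma l2_norm_sq: "(l2_norm h)\<^sup>2 = infsum (\<lambda>x. (cmod (h x))\<^sup>2) UNIV"
  unfolding l2_norm_def
  apply (rule real_sqrt_pow2)
  apply (rule infsum_nonneg)
  apply simp
  done

lemma l2_norm_nonneg: "l2_norm h \<ge> 0"
  unfolding l2_norm_def
  apply (rule real_sqrt_ge_zero)
  apply (rule infsum_nonneg)
  apply simp
  done

lemma pointwise_le: "l2 h \<Longrightarrow> cmod (h x) \<le> l2_norm h"
proof -
  assume h: "l2 h"
  have "(cmod (h x))\<^sup>2 \<le> (l2_norm h)\<^sup>2"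
    using partial_le[OF h, of "{x}"] by (simp add: l2_norm_sq)
  thus ?thesis using l2_norm_nonneg[of h] by (rule power2_le_imp_le)
qed

lemma Rep_diff: "Rep_ell2 (a - b) x = Rep_ell2 a x - Rep_ell2 b x"
  by (simp add: minus_ell2.rep_eq)

lemma Rep_norm_le: "cmod (Rep_ell2 a x - Rep_ell2 b x) \<le> norm (a - b)"
  using pointwise_le[OF Rep_l2[of "a - b"], of x] by (simp add: Rep_diff norm_Rep)

instance ell2 :: (type) complete_space
proof
  fix X :: "nat \<Rightarrow> 'a ell2" assume cX: "Cauchy X"
  define f where "f x = lim (\<lambda>n. Rep_ell2 (X n) x)" for x
  have conv: "(\<lambda>n. Rep_ell2 (X n) x) \<longlonglongrightarrow> f x" for x
  proof -
    have "Cauchy (\<lambda>n. Rep_ell2 (X n) x)"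
    proof (rule metric_CauchyI)
      fix e :: real assume "e > 0"
      then obtain M where M: "\<forall>m\<ge>M. \<forall>n\<ge>M. dist (X m) (X n) < e" using cX unfolding Cauchy_def by blast
      show "\<exists>M. \<forall>m\<ge>M. \<forall>n\<ge>M. dist (Rep_ell2 (X m) x) (Rep_ell2 (X n) x) < e"
        using M Rep_norm_le by (metis dist_norm le_less_trans)
    qed
    thus ?thesis unfolding f_def by (simp add: Cauchy_convergent_iff convergent_LIMSEQ_iff)
  qed
  have main: "\<exists>N. \<forall>n\<ge>N. l2 (\<lambda>x. Rep_ell2 (X n) x - f x) \<and> l2_norm (\<lambda>x. Rep_ell2 (X n) x - f x) \<le> e"
    if e: "e > 0" for e
  proof -
    obtain N where N: "\<forall>m\<ge>N. \<forall>n\<ge>N. dist (X m) (X n) < e" using cX e unfolding Cauchy_def by blast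
    have "l2 (\<lambda>x. Rep_ell2 (X n) x - f x) \<and> l2_norm (\<lambda>x. Rep_ell2 (X n) x - f x) \<le> e" if n: "n \<ge> N" for n
    proof -
      have fin: "(\<Sum>x\<in>F. (cmod (Rep_ell2 (X n) x - f x))\<^sup>2) \<le> e\<^sup>2" if F: "finite F" for F
      proof -
        have lim: "(\<lambda>m. \<Sum>x\<in>F. (cmod (Rep_ell2 (X n) x - Rep_ell2 (X m) x))\<^sup>2)
              \<longlonglongrightarrow> (\<Sum>x\<in>F. (cmod (Rep_ell2 (X n) x - f x))\<^sup>2)"
          by (intro tendsto_intros conv)
        have "(\<Sum>x\<in>F. (cmod (Rep_ell2 (X n) x - Rep_ell2 (X m) x))\<^sup>2) \<le> e\<^sup>2" if m: "m \<ge> N" for m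
        proof -
          have "(\<Sum>x\<in>F. (cmod (Rep_ell2 (X n) x - Rep_ell2 (X m) x))\<^sup>2)
              \<le> infsum (\<lambda>x. (cmod (Rep_ell2 (X n - X m) x))\<^sup>2) UNIV"
            using partial_le[OF Rep_l2[of "X n - X m"] F] by (simp add: Rep_diff)
          also have "\<dots> = (norm (X n - X m))\<^sup>2" by (simp add: norm_Rep l2_norm_sq)
          also have "\<dots> \<le> e\<^sup>2" using N n m
            by (metis dist_norm less_imp_le norm_ge_zero power_mono)
          finally show ?thesis .
        qed
        thus ?thesis using lim by (intro LIMSEQ_le_const2[OF lim]) auto
      qed
      have l2n: "l2 (\<lambda>x. Rep_ell2 (X n) x - f x)" by (rule bounded_l2(1)[OF fin])
      have "(l2_norm (\<lambda>x. Rep_ell2 (X n) x - f x))\<^sup>2 \<le> e\<^sup>2"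
        unfolding l2_norm_sq by (rule bounded_l2(2)[OF fin])
      hence "l2_norm (\<lambda>x. Rep_ell2 (X n) x - f x) \<le> e"
        by (rule power2_le_imp_le) (use e in auto)
      thus ?thesis using l2n by simp
    qed
    thus ?thesis by blast
  qed
  obtain N0 where N0: "\<forall>n\<ge>N0. l2 (\<lambda>x. Rep_ell2 (X n) x - f x)" using main[of 1] by auto
  have l2f: "l2 f"
    using l2_diff[OF Rep_l2[of "X N0"] N0[rule_format, of N0]] by simp
  have "X \<longlonglongrightarrow> Abs_ell2 f"
  proof (rule LIMSEQ_I)
    fix r :: real assume r: "r > 0"
    obtain N where N: "\<forall>n\<ge>N. l2 (\<lambda>x. Rep_ell2 (X n) x - f x) \<and> l2_norm (\<lambda>x. Rep_ell2 (X n) x - f x) \<le> r/2"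
      using main[of "r/2"] r by auto
    have "norm (X n - Abs_ell2 f) < r" if "n \<ge> N" for n
    proof -
      have "norm (X n - Abs_ell2 f) = l2_norm (\<lambda>x. Rep_ell2 (X n) x - f x)"
        unfolding norm_Rep by (simp add: minus_ell2.rep_eq Abs_ell2_inverse l2f)
      thus ?thesis using N that r by force
    qed
    thus "\<exists>no. \<forall>n\<ge>no. norm (X n - Abs_ell2 f) < r" by blast
  qed
  thus "convergent X" unfolding convergent_def by blast
qed


lemma norm_diff_sq: "(norm (x - y))\<^sup>2 = (norm x)\<^sup>2 - 2 * inner x y + (norm (y :: 'b::real_inner))\<^sup>2"
  by (simp add: power2_norm_eq_inner inner_diff_left inner_diff_right inner_commute)

lemma parallelogram: "(norm (x - y))\<^sup>2 + (norm (x + y))\<^sup>2 = 2 * (norm x)\<^sup>2 + 2 * (norm (y :: 'b::real_inner))\<^sup>2"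
  by (simp add: power2_norm_eq_inner inner_diff_left inner_diff_right inner_add_left inner_add_right inner_commute)

lemma quad_nonneg_imp_zero:
  fixes s a :: real
  assumes a: "a \<ge> 0" and h: "\<And>t. 0 \<le> - 2 * t * s + t\<^sup>2 * a"
  shows "s = 0"
proof -
  define c where "c = a + 1"
  have c: "c > 0" using a by (simp add: c_def)
  have "0 \<le> - 2 * (s/c) * s + (s/c)\<^sup>2 * a" by (rule h)
  hence "0 \<le> (- 2 * (s/c) * s + (s/c)\<^sup>2 * a) * c\<^sup>2" using c by simp
  also have "\<dots> = s\<^sup>2 * (a - 2 * c)" using c by (simp add: field_simps power2_eq_square)
  also have "\<dots> = - (s\<^sup>2 * (a + 2))" by (simp add: c_def algebra_simps)
  finally have "s\<^sup>2 * (a + 2) \<le> 0" by simp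
  moreover have "a + 2 > 0" using a by simp
  ultimately have "s\<^sup>2 \<le> 0" by (simp add: mult_le_0_iff)
  thus ?thesis by simp
qed

lemma dense_of_orth:
  fixes W :: "'b::{real_inner,complete_space} set"
  assumes W0: "0 \<in> W" and Wadd: "\<And>x y. x \<in> W \<Longrightarrow> y \<in> W \<Longrightarrow> x + y \<in> W"
    and Wscale: "\<And>c x. x \<in> W \<Longrightarrow> c *\<^sub>R x \<in> W"
    and orth: "\<And>r. (\<forall>w\<in>W. inner r w = 0) \<Longrightarrow> r = 0"
  shows "g \<in> closure W"
proof -
  define d where "d = infdist g W"
  have Wne: "W \<noteq> {}" using W0 by blast
  have dle: "d \<le> dist g a" if "a \<in> W" for a using infdist_le[OF that] d_def by simp
  have d0: "d \<ge> 0" using infdist_nonneg d_def by simp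
  have ex: "\<exists>y\<in>W. (dist g y)\<^sup>2 < d\<^sup>2 + 1 / real (Suc n)" for n
  proof -
    have lt: "d < sqrt (d\<^sup>2 + 1 / real (Suc n))"
      using d0 by (metis add_pos_nonneg linorder_not_le of_nat_0_less_iff real_sqrt_abs real_sqrt_le_mono
        zero_less_Suc abs_of_nonneg divide_pos_pos less_add_same_cancel1 zero_less_one order.not_eq_order_implies_strict
        power2_eq_square real_sqrt_less_iff)
    have "(INF a\<in>W. dist g a) < sqrt (d\<^sup>2 + 1 / real (Suc n))"
      using lt d_def infdist_notempty[OF Wne] by simp
    then obtain y where y: "y \<in> W" "dist g y < sqrt (d\<^sup>2 + 1 / real (Suc n))"
      using cINF_less_iff[OF Wne, of "\<lambda>a. dist g a"] by (auto simp: bdd_below_def intro: zero_le_dist)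
    hence "(dist g y)\<^sup>2 < (sqrt (d\<^sup>2 + 1 / real (Suc n)))\<^sup>2"
      by (intro power_strict_mono) auto
    also have "\<dots> = d\<^sup>2 + 1 / real (Suc n)" by simp
    finally show ?thesis using y by blast
  qed
  then obtain y where yW: "\<And>n. y n \<in> W" and yd: "\<And>n. (dist g (y n))\<^sup>2 < d\<^sup>2 + 1 / real (Suc n)"
    by metis
  have bound: "(norm (y m - y n))\<^sup>2 \<le> 2 / real (Suc m) + 2 / real (Suc n)" for m n
  proof -
    define a where "a = g - y m"
    define b where "b = g - y n"
    have mid: "(1/2) *\<^sub>R (y m + y n) \<in> W" using yW Wadd Wscale by blast
    have "d \<le> dist g ((1/2) *\<^sub>R (y m + y n))" by (rule dle[OF mid])
    hence "d\<^sup>2 \<le> (dist g ((1/2) *\<^sub>R (y m + y n)))\<^sup>2" using d0 by (simp add: power_mono)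
    moreover have "a + b = 2 *\<^sub>R (g - (1/2) *\<^sub>R (y m + y n))"
      by (simp add: a_def b_def algebra_simps scaleR_add_right scaleR_2)
    hence "(norm (a + b))\<^sup>2 = 4 * (dist g ((1/2) *\<^sub>R (y m + y n)))\<^sup>2"
      by (simp add: dist_norm power2_eq_square)
    moreover have "a - b = y n - y m" by (simp add: a_def b_def)
    moreover have "(norm a)\<^sup>2 < d\<^sup>2 + 1 / real (Suc m)" using yd[of m] by (simp add: a_def dist_norm)
    moreover have "(norm b)\<^sup>2 < d\<^sup>2 + 1 / real (Suc n)" using yd[of n] by (simp add: b_def dist_norm)
    moreover have "norm (y m - y n) = norm (y n - y m)" by (rule norm_minus_commute)
    ultimately show ?thesis using parallelogram[of a b] by simp
  qed
  have "Cauchy y"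
  proof (rule metric_CauchyI)
    fix e :: real assume e: "e > 0"
    obtain M where M: "inverse (real (Suc M)) < e\<^sup>2 / 4"
      using reals_Archimedean[of "e\<^sup>2/4"] e by auto
    have "dist (y m) (y n) < e" if "m \<ge> M" "n \<ge> M" for m n
    proof -
      have "1 / real (Suc m) \<le> inverse (real (Suc M))" "1 / real (Suc n) \<le> inverse (real (Suc M))"
        using that by (auto simp: field_simps)
      hence "(dist (y m) (y n))\<^sup>2 < e\<^sup>2"
        using bound[of m n] M by (simp add: dist_norm)
      thus ?thesis using e by (simp add: power_less_imp_less_base)
    qed
    thus "\<exists>M. \<forall>m\<ge>M. \<forall>n\<ge>M. dist (y m) (y n) < e" by blast
  qed
  then obtain y0 where y0: "y \<longlonglongrightarrow> y0" using Cauchy_convergent_iff convergent_def by blast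
  have y0cl: "y0 \<in> closure W" using closure_sequential yW y0 by blast
  have inv: "(\<lambda>n. d\<^sup>2 + 1 / real (Suc n)) \<longlonglongrightarrow> d\<^sup>2"
    using LIMSEQ_inverse_real_of_nat_add[of "d\<^sup>2"] by (simp add: divide_inverse)
  have up: "(norm (g - y0))\<^sup>2 \<le> d\<^sup>2"
  proof (rule LIMSEQ_le[OF _ inv])
    show "(\<lambda>n. (norm (g - y n))\<^sup>2) \<longlonglongrightarrow> (norm (g - y0))\<^sup>2" by (intro tendsto_intros y0)
    show "\<exists>N. \<forall>n\<ge>N. (norm (g - y n))\<^sup>2 \<le> d\<^sup>2 + 1 / real (Suc n)"
      using yd by (auto simp: dist_norm less_imp_le)
  qed
  have low: "d\<^sup>2 \<le> (norm (g - y0 - t *\<^sub>R w))\<^sup>2" if w: "w \<in> W" for w t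
  proof (rule LIMSEQ_le_const)
    show "(\<lambda>n. (norm (g - (y n + t *\<^sub>R w)))\<^sup>2) \<longlonglongrightarrow> (norm (g - y0 - t *\<^sub>R w))\<^sup>2"
      using y0 by (auto intro!: tendsto_intros simp: diff_diff_eq)
    have "d\<^sup>2 \<le> (norm (g - (y n + t *\<^sub>R w)))\<^sup>2" for n
    proof -
      have "y n + t *\<^sub>R w \<in> W" using yW w Wadd Wscale by blast
      hence "d \<le> norm (g - (y n + t *\<^sub>R w))" using dle dist_norm by metis
      thus ?thesis using d0 by (simp add: power_mono)
    qed
    thus "\<exists>N. \<forall>n\<ge>N. d\<^sup>2 \<le> (norm (g - (y n + t *\<^sub>R w)))\<^sup>2" by blast
  qed
  define r where "r = g - y0"
  have "inner r w = 0" if w: "w \<in> W" for w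
  proof (rule quad_nonneg_imp_zero)
    show "(norm w)\<^sup>2 \<ge> 0" by simp
    fix t :: real
    have "(norm r)\<^sup>2 \<le> (norm (r - t *\<^sub>R w))\<^sup>2" using order_trans[OF up low[OF w, of t]] by (simp add: r_def)
    also have "\<dots> = (norm r)\<^sup>2 - 2 * t * inner r w + t\<^sup>2 * (norm w)\<^sup>2"
      by (simp add: norm_diff_sq power_mult_distrib)
    finally show "0 \<le> - 2 * t * inner r w + t\<^sup>2 * (norm w)\<^sup>2" by simp
  qed
  hence "r = 0" using orth by blast
  thus ?thesis using y0cl by (simp add: r_def)
qed


locale jtree =
  fixes par :: "'a \<Rightarrow> 'a" and lev :: "'a \<Rightarrow> nat" and lam bet :: "'a \<Rightarrow> real"
  assumes lt: "level_tree par lev" and lam_pos: "\<And>x. lam x > 0"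
begin

abbreviation J where "J \<equiv> jacobi par lam bet"
abbreviation ch where "ch \<equiv> children par"

lemma lev_par: "lev (par x) = Suc (lev x)"
  using lt unfolding level_tree_def by simp

lemma fin_ch: "finite (ch x)"
  using lt unfolding level_tree_def by (cases "lev x = 0") auto

lemma ch_iff: "y \<in> ch x \<longleftrightarrow> par y = x"
  by (simp add: children_def)

lemma conn: "\<exists>n m. (par ^^ n) x = (par ^^ m) y"
  using lt unfolding level_tree_def by blast

lemma lam_ne: "complex_of_real (lam x) \<noteq> 0"
  using lam_pos[of x] by simp

lemma J_eq: "J u x = complex_of_real (lam x) * u (par x) + complex_of_real (bet x) * u x
      + (\<Sum>y\<in>ch x. complex_of_real (lam y) * u y)"
  by (simp add: jacobi_def)

lemma J_add: "J (\<lambda>x. f x + g x) x = J f x + J g x"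
  by (simp add: jacobi_def algebra_simps sum.distrib)

lemma J_diff: "J (\<lambda>x. f x - g x) x = J f x - J g x"
  by (simp add: jacobi_def algebra_simps sum_subtractf)

lemma J_scale: "J (\<lambda>x. c * f x) x = c * J f x"
  by (simp add: jacobi_def algebra_simps sum_distrib_left)

lemma J_cnj: "J (\<lambda>x. cnj (f x)) x = cnj (J f x)"
  by (simp add: jacobi_def)

lemma J_zero: "J (\<lambda>_. 0) x = 0"
  by (simp add: jacobi_def)

lemma wronski:
  assumes hu: "\<And>x. J u x = z * u x" and hv: "\<And>x. J v x = z * v x"
  shows "u (par x) * v x = u x * v (par x)"
proof (induct "lev x" arbitrary: x rule: less_induct)
  case less
  define Su where "Su = (\<Sum>y\<in>ch x. complex_of_real (lam y) * u y)"
  define Sv where "Sv = (\<Sum>y\<in>ch x. complex_of_real (lam y) * v y)"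
  have eu: "complex_of_real (lam x) * u (par x) + complex_of_real (bet x) * u x + Su = z * u x"
    using hu[of x] unfolding J_eq Su_def .
  have ev: "complex_of_real (lam x) * v (par x) + complex_of_real (bet x) * v x + Sv = z * v x"
    using hv[of x] unfolding J_eq Sv_def .
  have ch0: "u (par y) * v y - u y * v (par y) = 0" if "y \<in> ch x" for y
  proof -
    have "lev x = Suc (lev y)" using that lev_par[of y] by (simp add: ch_iff)
    hence "lev y < lev x" by simp
    thus ?thesis using less by simp
  qed
  have "(\<Sum>y\<in>ch x. complex_of_real (lam y) * (u (par y) * v y - u y * v (par y))) = 0"
    using ch0 by simp
  moreover have "(\<Sum>y\<in>ch x. complex_of_real (lam y) * (u (par y) * v y - u y * v (par y)))
      = u x * Sv - v x * Su"
  proof -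
    have "(\<Sum>y\<in>ch x. complex_of_real (lam y) * (u (par y) * v y - u y * v (par y)))
        = (\<Sum>y\<in>ch x. u x * (complex_of_real (lam y) * v y) - v x * (complex_of_real (lam y) * u y))"
      by (rule sum.cong) (auto simp: ch_iff algebra_simps)
    also have "\<dots> = u x * Sv - v x * Su"
      by (simp add: sum_subtractf sum_distrib_left Su_def Sv_def)
    finally show ?thesis .
  qed
  ultimately have s: "u x * Sv - v x * Su = 0" by simp
  have "complex_of_real (lam x) * (u (par x) * v x - u x * v (par x)) = 0"
    using eu ev s by algebra
  thus ?case using lam_ne[of x] by simp
qed

lemma down_closed:
  assumes hv: "\<And>x. J v x = z * v x" and z: "Im z \<noteq> 0"
    and vx: "v x = 0" and y: "y \<in> ch x"
  shows "v y = 0"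
proof -
  define Q where "Q x = complex_of_real (lam x) * (v (par x) * cnj (v x) - v x * cnj (v (par x)))" for x
  have zz: "z - cnj z \<noteq> 0" using z by (simp add: complex_eq_iff)
  define \<sigma> where "\<sigma> x = Q x / (z - cnj z)" for x
  have rec: "Q x = (z - cnj z) * complex_of_real ((cmod (v x))\<^sup>2) + (\<Sum>y\<in>ch x. Q y)" for x
  proof -
    define S where "S = (\<Sum>y\<in>ch x. complex_of_real (lam y) * v y)"
    define Sc where "Sc = (\<Sum>y\<in>ch x. complex_of_real (lam y) * cnj (v y))"
    have ev: "complex_of_real (lam x) * v (par x) + complex_of_real (bet x) * v x + S = z * v x"
      using hv[of x] unfolding J_eq S_def .
    hence evc: "complex_of_real (lam x) * cnj (v (par x)) + complex_of_real (bet x) * cnj (v x) + Sc = cnj z * cnj (v x)"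
      unfolding Sc_def S_def by (metis J_cnj J_eq hv complex_cnj_mult)
    have "(\<Sum>y\<in>ch x. Q y) = (\<Sum>y\<in>ch x. v x * (complex_of_real (lam y) * cnj (v y)) - cnj (v x) * (complex_of_real (lam y) * v y))"
      by (rule sum.cong) (auto simp: ch_iff Q_def algebra_simps)
    also have "\<dots> = v x * Sc - cnj (v x) * S"
      by (simp add: sum_subtractf sum_distrib_left S_def Sc_def)
    finally have sQ: "(\<Sum>y\<in>ch x. Q y) = v x * Sc - cnj (v x) * S" .
    have vv: "complex_of_real ((cmod (v x))\<^sup>2) = v x * cnj (v x)" by (rule complex_norm_square)
    have "Q x = (z - cnj z) * (v x * cnj (v x)) + (v x * Sc - cnj (v x) * S)"
      unfolding Q_def using ev evc by algebra
    thus ?thesis using sQ vv by simp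
  qed
  have srec: "\<sigma> x = complex_of_real ((cmod (v x))\<^sup>2) + (\<Sum>y\<in>ch x. \<sigma> y)" for x
  proof -
    have "\<sigma> x = ((z - cnj z) * complex_of_real ((cmod (v x))\<^sup>2) + sum Q (ch x)) / (z - cnj z)"
      using rec[of x] unfolding \<sigma>_def by simp
    also have "\<dots> = complex_of_real ((cmod (v x))\<^sup>2) + sum Q (ch x) / (z - cnj z)"
      using zz by (simp add: add_divide_distrib)
    also have "sum Q (ch x) / (z - cnj z) = (\<Sum>y\<in>ch x. \<sigma> y)"
      by (simp add: sum_divide_distrib \<sigma>_def)
    finally show ?thesis .
  qed
  have pos: "Im (\<sigma> x) = 0 \<and> Re (\<sigma> x) \<ge> (cmod (v x))\<^sup>2" for x
  proof (induct "lev x" arbitrary: x rule: less_induct)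
    case less
    have IH: "Im (\<sigma> y) = 0 \<and> Re (\<sigma> y) \<ge> (cmod (v y))\<^sup>2" if "y \<in> ch x" for y
    proof -
      have "lev x = Suc (lev y)" using that lev_par[of y] by (simp add: ch_iff)
      thus ?thesis using less by simp
    qed
    have "Im (\<sigma> x) = (\<Sum>y\<in>ch x. Im (\<sigma> y))" using srec[of x] by simp
    also have "\<dots> = 0" using IH by simp
    finally have i: "Im (\<sigma> x) = 0" .
    have "Re (\<sigma> x) = (cmod (v x))\<^sup>2 + (\<Sum>y\<in>ch x. Re (\<sigma> y))" using srec[of x] by simp
    moreover have "(\<Sum>y\<in>ch x. Re (\<sigma> y)) \<ge> 0"
    proof (rule sum_nonneg)
      fix y assume "y \<in> ch x"
      hence "(cmod (v y))\<^sup>2 \<le> Re (\<sigma> y)" using IH by blast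
      moreover have "0 \<le> (cmod (v y))\<^sup>2" by simp
      ultimately show "0 \<le> Re (\<sigma> y)" by linarith
    qed
    ultimately show ?case using i by simp
  qed
  have "Q x = 0" unfolding Q_def using vx by simp
  hence "\<sigma> x = 0" unfolding \<sigma>_def by simp
  hence "(\<Sum>y\<in>ch x. Re (\<sigma> y)) = 0" using srec[of x] vx by (simp add: complex_eq_iff)
  moreover have nn: "Re (\<sigma> y) \<ge> 0" for y
  proof -
    have "(cmod (v y))\<^sup>2 \<le> Re (\<sigma> y)" using pos[of y] by blast
    moreover have "0 \<le> (cmod (v y))\<^sup>2" by simp
    ultimately show "0 \<le> Re (\<sigma> y)" by linarith
  qed
  ultimately have "Re (\<sigma> y) = 0" using y sum_nonneg_eq_0_iff[OF fin_ch[of x], of "\<lambda>y. Re (\<sigma> y)"] by simp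
  hence "(cmod (v y))\<^sup>2 \<le> 0" using pos[of y] by simp
  thus ?thesis by simp
qed

lemma up_closed:
  assumes hv: "\<And>x. J v x = z * v x" and z: "Im z \<noteq> 0" and vx: "v x = 0"
  shows "v (par x) = 0"
proof -
  have ch0: "\<forall>y\<in>ch x. v y = 0" using down_closed[OF hv z vx] by blast
  have j0: "J v x = 0" using hv[of x] vx by simp
  have s0: "(\<Sum>y\<in>ch x. complex_of_real (lam y) * v y) = 0" using ch0 by simp
  have "complex_of_real (lam x) * v (par x) = J v x - complex_of_real (bet x) * v x - (\<Sum>y\<in>ch x. complex_of_real (lam y) * v y)"
    by (simp add: J_eq)
  hence "complex_of_real (lam x) * v (par x) = 0" using j0 s0 vx by simp
  thus ?thesis using lam_ne[of x] by simp
qed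

lemma nonvanishing:
  assumes hv: "\<And>x. J v x = z * v x" and z: "Im z \<noteq> 0" and v: "v \<noteq> (\<lambda>_. 0)"
  shows "v x \<noteq> 0"
proof
  assume vx: "v x = 0"
  have upm: "v ((par ^^ m) x) = 0" for m
  proof (induct m)
    case 0 show ?case using vx by simp
  next
    case (Suc m) thus ?case using up_closed[OF hv z, of "(par ^^ m) x"] by simp
  qed
  have down: "v ((par ^^ n) y) = 0 \<Longrightarrow> v y = 0" for n y
  proof (induct n arbitrary: y)
    case 0 thus ?case by simp
  next
    case (Suc n)
    hence "v (par y) = 0" by (simp add: funpow_Suc_right del: funpow.simps)
    thus ?case using down_closed[OF hv z, of "par y" y] by (simp add: ch_iff)
  qed
  have "v y = 0" for y
  proof -
    obtain n m where "(par ^^ n) y = (par ^^ m) x" using conn by blast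
    thus ?thesis using upm[of m] down[of n y] by simp
  qed
  thus False using v by auto
qed

lemma uniqueness:
  assumes hu: "\<And>x. J u x = z * u x" and hv: "\<And>x. J v x = z * v x"
    and z: "Im z \<noteq> 0" and v: "v \<noteq> (\<lambda>_. 0)"
  shows "\<exists>c. \<forall>x. u x = c * v x"
proof -
  have nz: "v x \<noteq> 0" for x by (rule nonvanishing[OF hv z v])
  have step: "u (par x) / v (par x) = u x / v x" for x
    using wronski[OF hu hv, of x] nz[of x] nz[of "par x"] by (simp add: field_simps)
  have iter: "u ((par ^^ n) x) / v ((par ^^ n) x) = u x / v x" for n x
    by (induct n) (auto simp: step)
  fix x0
  have "u y = (u x0 / v x0) * v y" for y
  proof -
    obtain n m where nm: "(par ^^ n) y = (par ^^ m) x0" using conn by blast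
    have "u y / v y = u x0 / v x0" using iter[of n y] iter[of m x0] nm by simp
    thus ?thesis using nz[of y] by (simp add: field_simps)
  qed
  thus ?thesis by blast
qed

lemma kernel_trivial:
  assumes hu: "\<And>x. J u x = z * u x" and hv: "\<And>x. J v x = z * v x"
    and z: "Im z \<noteq> 0" and v: "v \<noteq> (\<lambda>_. 0)" and nl: "\<not> l2 v" and ul: "l2 u"
  shows "u = (\<lambda>_. 0)"
proof -
  obtain c where c: "\<forall>x. u x = c * v x" using uniqueness[OF hu hv z v] by blast
  show ?thesis
  proof (cases "c = 0")
    case True thus ?thesis using c by auto
  next
    case False
    have "v = (\<lambda>x. (1/c) * u x)" using c False by auto
    hence "l2 v" using l2_scale[OF ul, of "1/c"] by simp
    thus ?thesis using nl by simp
  qed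
qed

end

lemma fs_sum: "finite S \<Longrightarrow> (\<And>y. y \<notin> S \<Longrightarrow> h y = 0) \<Longrightarrow> infsum h UNIV = sum h S"
proof -
  assume S: "finite S" and h: "\<And>y. y \<notin> S \<Longrightarrow> h y = 0"
  have "infsum h UNIV = infsum h S" by (rule infsum_cong_neutral) (use h in auto)
  thus ?thesis using S by simp
qed

lemma fs_summable: "finite S \<Longrightarrow> (\<And>y. y \<notin> S \<Longrightarrow> h y = 0) \<Longrightarrow> h summable_on UNIV"
proof -
  assume S: "finite S" and h: "\<And>y. y \<notin> S \<Longrightarrow> h y = 0"
  have "h summable_on S" using S by simp
  thus ?thesis by (subst summable_on_cong_neutral[of S UNIV h h]) (use h in auto)
qed

definition dl :: "'a \<Rightarrow> complex \<Rightarrow> 'a \<Rightarrow> complex" where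
  "dl a c = (\<lambda>y. if y = a then c else 0)"

lemma fin_supp_dl: "fin_supp (dl a c)"
  unfolding fin_supp_def dl_def by (rule finite_subset[of _ "{a}"]) auto

lemma inner_dl: "l2_inner (dl a c) g = c * cnj (g a)"
  unfolding l2_inner_def by (subst fs_sum[of "{a}"]) (auto simp: dl_def)

lemma fin_supp_add: "fin_supp f \<Longrightarrow> fin_supp g \<Longrightarrow> fin_supp (\<lambda>x. f x + g x)"
  unfolding fin_supp_def by (rule finite_subset[of _ "{x. f x \<noteq> 0} \<union> {x. g x \<noteq> 0}"]) auto

lemma fin_supp_diff: "fin_supp f \<Longrightarrow> fin_supp g \<Longrightarrow> fin_supp (\<lambda>x. f x - g x)"
  unfolding fin_supp_def by (rule finite_subset[of _ "{x. f x \<noteq> 0} \<union> {x. g x \<noteq> 0}"]) auto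

lemma fin_supp_scale: "fin_supp f \<Longrightarrow> fin_supp (\<lambda>x. c * f x)"
  unfolding fin_supp_def by (rule finite_subset[of _ "{x. f x \<noteq> 0}"]) auto

lemma fin_supp_zero: "fin_supp (\<lambda>_. 0)"
  unfolding fin_supp_def by simp

lemma inner_add_fs: "fin_supp f \<Longrightarrow> fin_supp g \<Longrightarrow>
    l2_inner (\<lambda>x. f x + g x) h = l2_inner f h + l2_inner g h"
  unfolding l2_inner_def by (simp add: distrib_right infsum_add fin_supp_prod_summable)

lemma inner_zero_left: "l2_inner (\<lambda>_. 0) h = 0"
  unfolding l2_inner_def by simp

lemma infsum_diff': "f summable_on A \<Longrightarrow> g summable_on A \<Longrightarrow>
    infsum (\<lambda>x. f x - g x) A = infsum f A - (infsum g A :: complex)"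
  using infsum_add[of f A "\<lambda>x. - g x"] summable_on_uminus[of g A] infsum_uminus[of g A]
  by simp

lemma inner_diff_l2: "l2 f \<Longrightarrow> l2 g \<Longrightarrow> l2 h \<Longrightarrow>
    l2_inner (\<lambda>x. f x - g x) h = l2_inner f h - l2_inner g h"
  unfolding l2_inner_def by (simp add: left_diff_distrib infsum_diff' l2_prod)

lemma inner_scale_left: "l2 f \<Longrightarrow> l2 h \<Longrightarrow> l2_inner (\<lambda>x. c * f x) h = c * l2_inner f h"
  unfolding l2_inner_def by (simp add: mult.assoc infsum_cmult_right l2_prod)

lemma inner_scale_right: "l2 f \<Longrightarrow> l2 h \<Longrightarrow> l2_inner f (\<lambda>x. c * h x) = cnj c * l2_inner f h"
proof -
  assume f: "l2 f" and h: "l2 h"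
  have "l2_inner f (\<lambda>x. c * h x) = infsum (\<lambda>x. cnj c * (f x * cnj (h x))) UNIV"
    unfolding l2_inner_def by (simp add: algebra_simps)
  also have "\<dots> = cnj c * l2_inner f h"
    unfolding l2_inner_def by (rule infsum_cmult_right) (use f h l2_prod in auto)
  finally show ?thesis .
qed

lemma inner_conj: "l2_inner f g = cnj (l2_inner g f)"
  unfolding l2_inner_def by (rule l2_inner_sym)

lemma Abs_minus: "l2 f \<Longrightarrow> l2 g \<Longrightarrow> Abs_ell2 f - Abs_ell2 g = Abs_ell2 (\<lambda>x. f x - g x)"
  by (simp add: minus_ell2.abs_eq eq_onp_def)

lemma Abs_plus: "l2 f \<Longrightarrow> l2 g \<Longrightarrow> Abs_ell2 f + Abs_ell2 g = Abs_ell2 (\<lambda>x. f x + g x)"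
  by (simp add: plus_ell2.abs_eq eq_onp_def)

lemma Abs_scaleR: "l2 f \<Longrightarrow> r *\<^sub>R Abs_ell2 f = Abs_ell2 (\<lambda>x. complex_of_real r * f x)"
  by (simp add: scaleR_ell2.abs_eq eq_onp_def)

lemma norm_Abs_diff: "l2 f \<Longrightarrow> l2 g \<Longrightarrow> norm (Abs_ell2 f - Abs_ell2 g) = l2_norm (\<lambda>x. f x - g x)"
  by (simp add: Abs_minus norm_ell2_Abs l2_diff)

lemma l2_norm_scale: "l2_norm (\<lambda>x. c * f x) = cmod c * l2_norm f"
proof -
  have "infsum (\<lambda>x. (cmod (c * f x))\<^sup>2) UNIV = (cmod c)\<^sup>2 * infsum (\<lambda>x. (cmod (f x))\<^sup>2) UNIV"
    by (simp add: norm_mult power_mult_distrib infsum_cmult_right')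
  thus ?thesis unfolding l2_norm_def by (simp add: real_sqrt_mult)
qed

lemma l2_norm_triangle: "l2 f \<Longrightarrow> l2 g \<Longrightarrow> l2_norm (\<lambda>x. f x + g x) \<le> l2_norm f + l2_norm g"
  using norm_triangle_ineq[of "Abs_ell2 f" "Abs_ell2 g"]
  by (simp add: Abs_plus norm_ell2_Abs l2_add)

lemma l2_norm_zero_iff: "l2 f \<Longrightarrow> l2_norm f = 0 \<longleftrightarrow> f = (\<lambda>_. 0)"
proof -
  assume f: "l2 f"
  have "l2_norm f = 0 \<longleftrightarrow> Abs_ell2 f = 0" using norm_ell2_Abs[OF f] by (metis norm_eq_zero)
  also have "\<dots> \<longleftrightarrow> f = (\<lambda>_. 0)"
    by (metis Abs_ell2_inverse f l2_zero mem_Collect_eq zero_ell2.abs_eq zero_ell2.rep_eq eq_onp_same_args)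
  finally show ?thesis .
qed

lemma inner_cs: "l2 a \<Longrightarrow> l2 b \<Longrightarrow> cmod (l2_inner a b) \<le> l2_norm a * l2_norm b"
proof -
  assume a: "l2 a" and b: "l2 b"
  define A where "A x = complex_of_real (cmod (a x))" for x
  define B where "B x = complex_of_real (cmod (b x))" for x
  have nA: "(cmod (A x))\<^sup>2 = (cmod (a x))\<^sup>2" for x by (simp add: A_def)
  have nB: "(cmod (B x))\<^sup>2 = (cmod (b x))\<^sup>2" for x by (simp add: B_def)
  have lA: "l2 A" using a unfolding l2_def nA .
  have lB: "l2 B" using b unfolding l2_def nB .
  have "cmod (l2_inner a b) \<le> infsum (\<lambda>x. cmod (a x * cnj (b x))) UNIV"
    unfolding l2_inner_def by (rule norm_infsum_bound) (rule l2_prod_abs[OF a b])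
  also have "\<dots> = infsum (\<lambda>x. cmod (a x) * cmod (b x)) UNIV"
    by (simp add: norm_mult)
  also have "\<dots> = Re (l2_inner A B)"
  proof -
    have "l2_inner A B = complex_of_real (infsum (\<lambda>x. cmod (a x) * cmod (b x)) UNIV)"
      unfolding l2_inner_def A_def B_def infsum_of_real_c[symmetric] by simp
    thus ?thesis by simp
  qed
  also have "\<dots> = inner (Abs_ell2 A) (Abs_ell2 B)" by (simp add: inner_ell2_Abs lA lB)
  also have "\<dots> \<le> norm (Abs_ell2 A) * norm (Abs_ell2 B)" by (rule norm_cauchy_schwarz)
  also have "\<dots> = l2_norm a * l2_norm b"
    by (simp add: norm_ell2_Abs lA lB l2_norm_def nA nB)
  finally show ?thesis .
qed

lemma lim_inner_left:
  assumes W: "\<And>n. l2 (W n)" and w: "l2 w" and u: "l2 u"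
    and lim: "(\<lambda>n. l2_norm (\<lambda>x. W n x - w x)) \<longlonglongrightarrow> 0"
  shows "(\<lambda>n. l2_inner (W n) u) \<longlonglongrightarrow> l2_inner w u"
proof -
  have "(\<lambda>n. l2_inner (W n) u - l2_inner w u) \<longlonglongrightarrow> 0"
  proof (rule Lim_null_comparison)
    show "\<forall>\<^sub>F n in sequentially. norm (l2_inner (W n) u - l2_inner w u) \<le> l2_norm (\<lambda>x. W n x - w x) * l2_norm u"
    proof (rule always_eventually, rule allI)
      fix n
      have "l2_inner (W n) u - l2_inner w u = l2_inner (\<lambda>x. W n x - w x) u"
        by (simp add: inner_diff_l2 W w u)
      thus "norm (l2_inner (W n) u - l2_inner w u) \<le> l2_norm (\<lambda>x. W n x - w x) * l2_norm u"
        using inner_cs[OF l2_diff[OF W w] u] by simp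
    qed
    show "(\<lambda>n. l2_norm (\<lambda>x. W n x - w x) * l2_norm u) \<longlonglongrightarrow> 0"
      using tendsto_mult[OF lim tendsto_const[of "l2_norm u"]] by simp
  qed
  thus ?thesis by (simp add: LIM_zero_iff)
qed

lemma lim_inner_right:
  assumes W: "\<And>n. l2 (W n)" and w: "l2 w" and u: "l2 u"
    and lim: "(\<lambda>n. l2_norm (\<lambda>x. W n x - w x)) \<longlonglongrightarrow> 0"
  shows "(\<lambda>n. l2_inner u (W n)) \<longlonglongrightarrow> l2_inner u w"
proof -
  have "(\<lambda>n. cnj (l2_inner (W n) u)) \<longlonglongrightarrow> cnj (l2_inner w u)"
    by (rule tendsto_cnj, rule lim_inner_left[OF W w u lim])
  thus ?thesis by (simp add: inner_conj[of u])
qed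

lemma pointwise_lim:
  assumes F: "\<And>n. l2 (F n)" and u: "l2 u"
    and lim: "(\<lambda>n. l2_norm (\<lambda>x. F n x - u x)) \<longlonglongrightarrow> 0"
  shows "(\<lambda>n. F n x) \<longlonglongrightarrow> u x"
proof -
  have "(\<lambda>n. F n x - u x) \<longlonglongrightarrow> 0"
  proof (rule Lim_null_comparison)
    show "\<forall>\<^sub>F n in sequentially. norm (F n x - u x) \<le> l2_norm (\<lambda>x. F n x - u x)"
      using pointwise_le[OF l2_diff[OF F u]] by simp
    show "(\<lambda>n. l2_norm (\<lambda>x. F n x - u x)) \<longlonglongrightarrow> 0" by (rule lim)
  qed
  thus ?thesis by (simp add: LIM_zero_iff)
qed

context jtree
begin

lemma fin_supp_J: "fin_supp f \<Longrightarrow> fin_supp (J f)"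
proof -
  assume f: "fin_supp f"
  define S where "S = {x. f x \<noteq> 0}"
  have S: "finite S" using f unfolding fin_supp_def S_def .
  have "{y. J f y \<noteq> 0} \<subseteq> S \<union> par ` S \<union> (\<Union>x\<in>S. ch x)"
  proof
    fix y assume "y \<in> {y. J f y \<noteq> 0}"
    hence ne: "J f y \<noteq> 0" by simp
    show "y \<in> S \<union> par ` S \<union> (\<Union>x\<in>S. ch x)"
    proof (rule ccontr)
      assume "y \<notin> S \<union> par ` S \<union> (\<Union>x\<in>S. ch x)"
      hence a: "f y = 0" "f (par y) = 0" "\<forall>k\<in>ch y. f k = 0"
        by (auto simp: S_def ch_iff)
      hence "J f y = 0" unfolding J_eq by simp
      thus False using ne by simp
    qed
  qed
  moreover have "finite (S \<union> par ` S \<union> (\<Union>x\<in>S. ch x))" using S fin_ch by auto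
  ultimately show ?thesis unfolding fin_supp_def by (rule finite_subset)
qed

lemma J_dl: "J (dl a c) y = (if par y = a then complex_of_real (lam y) * c else 0)
    + (if y = a then complex_of_real (bet a) * c else 0) + (if y = par a then complex_of_real (lam a) * c else 0)"
proof -
  have "(\<Sum>k\<in>ch y. complex_of_real (lam k) * dl a c k) = (\<Sum>k\<in>ch y. if k = a then complex_of_real (lam a) * c else 0)"
    by (rule sum.cong) (auto simp: dl_def)
  also have "\<dots> = (if y = par a then complex_of_real (lam a) * c else 0)"
    using fin_ch[of y] by (auto simp: ch_iff)
  finally show ?thesis unfolding J_eq by (simp add: dl_def)
qed

lemma par_ne: "par x \<noteq> x"
  using lev_par[of x] by (metis n_not_Suc_n)

lemma inner_J_dl: "l2_inner (J (dl a c)) g = c * cnj (J g a)"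
proof -
  define S where "S = insert a (insert (par a) (ch a))"
  have S: "finite S" using fin_ch by (simp add: S_def)
  define T1 where "T1 y = (if par y = a then complex_of_real (lam y) * c * cnj (g y) else 0)" for y
  define T2 where "T2 y = (if y = a then complex_of_real (bet a) * c * cnj (g y) else 0)" for y
  define T3 where "T3 y = (if y = par a then complex_of_real (lam a) * c * cnj (g y) else 0)" for y
  have pt: "J (dl a c) y * cnj (g y) = T1 y + T2 y + T3 y" for y
    unfolding J_dl T1_def T2_def T3_def by (simp add: distrib_right)
  have "l2_inner (J (dl a c)) g = (\<Sum>y\<in>S. J (dl a c) y * cnj (g y))"
    unfolding l2_inner_def by (rule fs_sum[OF S]) (auto simp: S_def J_dl ch_iff)
  also have "\<dots> = sum T1 S + sum T2 S + sum T3 S"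
    unfolding pt by (simp add: sum.distrib)
  also have "sum T1 S = (\<Sum>y\<in>ch a. complex_of_real (lam y) * c * cnj (g y))"
  proof -
    have "sum T1 S = (\<Sum>y\<in>{y\<in>S. par y = a}. complex_of_real (lam y) * c * cnj (g y))"
      unfolding T1_def by (simp add: sum.inter_filter[OF S])
    also have "{y\<in>S. par y = a} = ch a" by (auto simp: S_def ch_iff)
    finally show ?thesis .
  qed
  also have "sum T2 S = complex_of_real (bet a) * c * cnj (g a)"
    unfolding T2_def using S by (simp add: S_def)
  also have "sum T3 S = complex_of_real (lam a) * c * cnj (g (par a))"
    unfolding T3_def using S by (simp add: S_def)
  also have "(\<Sum>y\<in>ch a. complex_of_real (lam y) * c * cnj (g y)) + complex_of_real (bet a) * c * cnj (g a)
      + complex_of_real (lam a) * c * cnj (g (par a)) = c * cnj (J g a)"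
    unfolding J_eq by (simp add: algebra_simps sum_distrib_left)
  finally show ?thesis .
qed

lemma L_sym_aux: "finite S \<Longrightarrow> \<forall>\<phi>. {x. \<phi> x \<noteq> 0} \<subseteq> S \<longrightarrow> l2_inner (J \<phi>) \<psi> = l2_inner \<phi> (J \<psi>)"
proof (induct S rule: finite_induct)
  case empty
  show ?case
  proof (intro allI impI)
    fix \<phi> :: "'a \<Rightarrow> complex" assume "{x. \<phi> x \<noteq> 0} \<subseteq> {}"
    hence p: "\<phi> = (\<lambda>_. 0)" by auto
    have "J \<phi> = (\<lambda>_. 0)" unfolding p using J_zero by auto
    thus "l2_inner (J \<phi>) \<psi> = l2_inner \<phi> (J \<psi>)" using p by (simp add: inner_zero_left)
  qed
next
  case (insert a S)
  show ?case
  proof (intro allI impI)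
    fix \<phi> :: "'a \<Rightarrow> complex" assume sp: "{x. \<phi> x \<noteq> 0} \<subseteq> insert a S"
    define c where "c = \<phi> a"
    define \<phi>' where "\<phi>' = \<phi>(a := 0)"
    have sp': "{x. \<phi>' x \<noteq> 0} \<subseteq> S" using sp by (auto simp: \<phi>'_def)
    have fs': "fin_supp \<phi>'" unfolding fin_supp_def using sp' insert(1) by (rule finite_subset)
    define \<psi>0 where "\<psi>0 = (\<lambda>x. \<phi>' x + dl a c x)"
    have dec: "\<phi> = \<psi>0" by (auto simp: \<psi>0_def \<phi>'_def dl_def c_def)
    have Jdec: "J \<psi>0 = (\<lambda>y. J \<phi>' y + J (dl a c) y)"
      unfolding \<psi>0_def by (rule ext, rule J_add)
    have "l2_inner (J \<phi>) \<psi> = l2_inner (J \<phi>') \<psi> + l2_inner (J (dl a c)) \<psi>"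
      unfolding dec Jdec by (rule inner_add_fs) (auto intro: fin_supp_J fs' fin_supp_dl)
    also have "l2_inner (J \<phi>') \<psi> = l2_inner \<phi>' (J \<psi>)" using insert(3) sp' by blast
    also have "l2_inner (J (dl a c)) \<psi> = l2_inner (dl a c) (J \<psi>)"
      by (simp add: inner_J_dl inner_dl)
    also have "l2_inner \<phi>' (J \<psi>) + l2_inner (dl a c) (J \<psi>) = l2_inner \<phi> (J \<psi>)"
      unfolding dec \<psi>0_def by (rule inner_add_fs[symmetric]) (auto intro: fs' fin_supp_dl)
    finally show "l2_inner (J \<phi>) \<psi> = l2_inner \<phi> (J \<psi>)" .
  qed
qed

lemma L_sym: "fin_supp \<phi> \<Longrightarrow> l2_inner (J \<phi>) \<psi> = l2_inner \<phi> (J \<psi>)"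
  using L_sym_aux[of "{x. \<phi> x \<noteq> 0}"] unfolding fin_supp_def by blast

end

context jtree
begin

abbreviation GG where "GG \<equiv> jacobi_graph par lam bet"

lemma graph_iff: "(a, b) \<in> GG \<longleftrightarrow> fin_supp a \<and> b = J a"
  by (auto simp: jacobi_graph_def)

lemma closure_E:
  assumes "(u, w) \<in> op_closure GG"
  shows "l2 u" "l2 w" "\<exists>F. (\<forall>n. fin_supp (F n)) \<and> (\<lambda>n. l2_norm (\<lambda>x. F n x - u x)) \<longlonglongrightarrow> 0
      \<and> (\<lambda>n. l2_norm (\<lambda>x. J (F n) x - w x)) \<longlonglongrightarrow> 0"
proof -
  from assms obtain F W where l: "l2 u" "l2 w" and FW: "\<forall>n. (F n, W n) \<in> GG"
    and c1: "(\<lambda>n. l2_norm (F n - u)) \<longlonglongrightarrow> 0" and c2: "(\<lambda>n. l2_norm (W n - w)) \<longlonglongrightarrow> 0"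
    unfolding op_closure_def by blast
  show "l2 u" "l2 w" by (fact l)+
  have Wn: "W n = J (F n)" "fin_supp (F n)" for n using FW graph_iff by auto
  show "\<exists>F. (\<forall>n. fin_supp (F n)) \<and> (\<lambda>n. l2_norm (\<lambda>x. F n x - u x)) \<longlonglongrightarrow> 0
      \<and> (\<lambda>n. l2_norm (\<lambda>x. J (F n) x - w x)) \<longlonglongrightarrow> 0"
    using c1 c2 Wn by (intro exI[of _ F]) (auto simp: fun_diff_def)
qed

lemma closure_I:
  assumes "l2 u" "l2 w" "\<And>n. fin_supp (F n)" "(\<lambda>n. l2_norm (\<lambda>x. F n x - u x)) \<longlonglongrightarrow> 0"
    "(\<lambda>n. l2_norm (\<lambda>x. J (F n) x - w x)) \<longlonglongrightarrow> 0"
  shows "(u, w) \<in> op_closure GG"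
proof -
  have a: "\<forall>n. (F n, J (F n)) \<in> GG" using assms(3) graph_iff by simp
  have b: "(\<lambda>n. l2_norm (F n - u)) \<longlonglongrightarrow> 0" using assms(4) by (simp add: fun_diff_def)
  have c: "(\<lambda>n. l2_norm (J (F n) - w)) \<longlonglongrightarrow> 0" using assms(5) by (simp add: fun_diff_def)
  show ?thesis unfolding op_closure_def mem_Collect_eq case_prod_conv
    by (intro conjI exI[of _ F] exI[of _ "\<lambda>n. J (F n)"] assms(1) assms(2) a b c)
qed

lemma G_sub_C: "fin_supp f \<Longrightarrow> (f, J f) \<in> op_closure GG"
  by (rule closure_I[of _ _ "\<lambda>n. f"]) (auto simp: fin_supp_l2 fin_supp_J l2_norm_def)

lemma C_pointwise: "(u, w) \<in> op_closure GG \<Longrightarrow> w x = J u x"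
proof -
  assume uw: "(u, w) \<in> op_closure GG"
  obtain F where F: "\<And>n. fin_supp (F n)" and c1: "(\<lambda>n. l2_norm (\<lambda>x. F n x - u x)) \<longlonglongrightarrow> 0"
    and c2: "(\<lambda>n. l2_norm (\<lambda>x. J (F n) x - w x)) \<longlonglongrightarrow> 0"
    using closure_E[OF uw] by blast
  have lu: "l2 u" and lw: "l2 w" using closure_E[OF uw] by auto
  have pl: "(\<lambda>n. F n y) \<longlonglongrightarrow> u y" for y
    by (rule pointwise_lim[OF fin_supp_l2[OF F] lu c1])
  have "(\<lambda>n. J (F n) x) \<longlonglongrightarrow> w x"
    by (rule pointwise_lim[OF fin_supp_l2[OF fin_supp_J[OF F]] lw c2])
  moreover have "(\<lambda>n. J (F n) x) \<longlonglongrightarrow> J u x"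
    unfolding J_eq by (intro tendsto_intros pl)
  ultimately show ?thesis by (rule LIMSEQ_unique)
qed

lemma A_pointwise: "(u, w) \<in> op_adjoint (op_closure GG) \<Longrightarrow> w x = J u x"
proof -
  assume uw: "(u, w) \<in> op_adjoint (op_closure GG)"
  have "(dl x 1, J (dl x 1)) \<in> op_closure GG" by (rule G_sub_C[OF fin_supp_dl])
  moreover have "\<forall>(f, g)\<in>op_closure GG. l2_inner g u = l2_inner f w"
    using uw unfolding op_adjoint_def by simp
  ultimately have "l2_inner (J (dl x 1)) u = l2_inner (dl x 1) w" by (drule_tac bspec) auto
  hence "cnj (J u x) = cnj (w x)" by (simp add: inner_J_dl inner_dl)
  thus ?thesis by simp
qed

lemma LemA:
  assumes lu: "l2 u" and lw: "l2 w" and wJ: "\<And>x. w x = J u x"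
  shows "(u, w) \<in> op_adjoint (op_closure GG)"
proof -
  have key: "l2_inner g u = l2_inner f w" if fg: "(f, g) \<in> op_closure GG" for f g
  proof -
    obtain F where F: "\<And>n. fin_supp (F n)" and c1: "(\<lambda>n. l2_norm (\<lambda>x. F n x - f x)) \<longlonglongrightarrow> 0"
      and c2: "(\<lambda>n. l2_norm (\<lambda>x. J (F n) x - g x)) \<longlonglongrightarrow> 0"
      using closure_E[OF fg] by blast
    have lf: "l2 f" and lg: "l2 g" using closure_E[OF fg] by auto
    have wJ': "w = J u" by (rule ext) (rule wJ)
    have eq: "l2_inner (J (F n)) u = l2_inner (F n) w" for n
      using L_sym[OF F] wJ' by simp
    have l1: "(\<lambda>n. l2_inner (J (F n)) u) \<longlonglongrightarrow> l2_inner g u"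
      by (rule lim_inner_left[OF fin_supp_l2[OF fin_supp_J[OF F]] lg lu c2])
    have l2': "(\<lambda>n. l2_inner (F n) w) \<longlonglongrightarrow> l2_inner f w"
      by (rule lim_inner_left[OF fin_supp_l2[OF F] lf lw c1])
    have "(\<lambda>n. l2_inner (J (F n)) u) = (\<lambda>n. l2_inner (F n) w)" using eq by (rule ext)
    hence "(\<lambda>n. l2_inner (J (F n)) u) \<longlonglongrightarrow> l2_inner f w" using l2' by simp
    with l1 show ?thesis by (rule LIMSEQ_unique)
  qed
  have "\<forall>(f, g)\<in>op_closure GG. l2_inner g u = l2_inner f w"
  proof (rule ballI)
    fix p assume "p \<in> op_closure GG"
    thus "case p of (f, g) \<Rightarrow> l2_inner g u = l2_inner f w" using key by (cases p) simp
  qed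
  thus ?thesis unfolding op_adjoint_def using lu lw by simp
qed

lemma C_sub_A: "op_closure GG \<subseteq> op_adjoint (op_closure GG)"
proof
  fix p assume p: "p \<in> op_closure GG"
  obtain u w where uw: "p = (u, w)" by (cases p)
  have p': "(u, w) \<in> op_closure GG" using p uw by simp
  have "(u, w) \<in> op_adjoint (op_closure GG)"
    by (rule LemA[OF closure_E(1)[OF p'] closure_E(2)[OF p'] C_pointwise[OF p']])
  thus "p \<in> op_adjoint (op_closure GG)" using uw by simp
qed

lemma dir1:
  assumes hv: "\<And>x. J v x = z * v x" and z: "Im z \<noteq> 0" and v: "v \<noteq> (\<lambda>_. 0)" and lv: "l2 v"
  shows "\<not> self_adjoint_op (op_closure GG)"
proof
  assume sa: "self_adjoint_op (op_closure GG)"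
  have lzv: "l2 (\<lambda>x. z * v x)" by (rule l2_scale[OF lv])
  have A: "(v, \<lambda>x. z * v x) \<in> op_adjoint (op_closure GG)"
    by (rule LemA[OF lv lzv]) (simp add: hv)
  hence C: "(v, \<lambda>x. z * v x) \<in> op_closure GG" using sa unfolding self_adjoint_op_def by simp
  have "\<forall>(f, g)\<in>op_closure GG. l2_inner g v = l2_inner f (\<lambda>x. z * v x)"
    using A unfolding op_adjoint_def by simp
  hence "l2_inner (\<lambda>x. z * v x) v = l2_inner v (\<lambda>x. z * v x)"
    using C by (drule_tac bspec) auto
  hence e: "z * l2_inner v v = cnj z * l2_inner v v"
    by (simp add: inner_scale_left inner_scale_right lv)
  have "l2_inner v v = complex_of_real ((l2_norm v)\<^sup>2)"
    by (simp add: l2_inner_def l2_self l2_norm_sq)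
  moreover have "l2_norm v \<noteq> 0" using l2_norm_zero_iff[OF lv] v by simp
  ultimately have "l2_inner v v \<noteq> 0" by simp
  hence "z = cnj z" using e by simp
  thus False using z by (simp add: complex_eq_iff)
qed

end

lemma Abs_zero: "Abs_ell2 (\<lambda>_. 0) = 0"
  by (rule Rep_ell2_inject[THEN iffD1]) (simp add: Abs_ell2_inverse l2_zero zero_ell2.rep_eq)

lemma tendsto_l2:
  assumes "\<And>n. l2 (F n)" "l2 f" "(\<lambda>n. Abs_ell2 (F n)) \<longlonglongrightarrow> Abs_ell2 f"
  shows "(\<lambda>n. l2_norm (\<lambda>x. F n x - f x)) \<longlonglongrightarrow> 0"
proof -
  have "(\<lambda>n. norm (Abs_ell2 (F n) - Abs_ell2 f)) \<longlonglongrightarrow> 0"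
    using assms(3) by (simp add: tendsto_norm_zero_iff LIM_zero_iff)
  thus ?thesis using assms(1,2) by (simp add: norm_Abs_diff)
qed

context jtree
begin

definition K :: "complex \<Rightarrow> ('a \<Rightarrow> complex) \<Rightarrow> 'a \<Rightarrow> complex" where
  "K z \<phi> = (\<lambda>x. J \<phi> x - z * \<phi> x)"

lemma fin_supp_K: "fin_supp \<phi> \<Longrightarrow> fin_supp (K z \<phi>)"
  unfolding K_def by (intro fin_supp_diff fin_supp_J fin_supp_scale)

lemma K_add: "K z (\<lambda>x. \<phi> x + \<psi> x) = (\<lambda>x. K z \<phi> x + K z \<psi> x)"
  unfolding K_def by (rule ext) (simp add: J_add algebra_simps)

lemma K_diff: "K z (\<lambda>x. \<phi> x - \<psi> x) = (\<lambda>x. K z \<phi> x - K z \<psi> x)"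
  unfolding K_def by (rule ext) (simp add: J_diff algebra_simps)

lemma K_scale: "K z (\<lambda>x. c * \<phi> x) = (\<lambda>x. c * K z \<phi> x)"
  unfolding K_def by (rule ext) (simp add: J_scale algebra_simps)

lemma K_zero: "K z (\<lambda>_. 0) = (\<lambda>_. 0)"
  unfolding K_def by (rule ext) (simp add: J_zero)

lemma lower_bound:
  assumes f: "fin_supp \<phi>"
  shows "\<bar>Im z\<bar> * l2_norm \<phi> \<le> l2_norm (K z \<phi>)"
proof -
  define a where "a = Re z"
  define b where "b = Im z"
  define \<alpha> where "\<alpha> = (\<lambda>x. J \<phi> x - complex_of_real a * \<phi> x)"
  define \<beta> where "\<beta> = (\<lambda>x. (\<i> * complex_of_real b) * \<phi> x)"
  have l\<phi>: "l2 \<phi>" by (rule fin_supp_l2[OF f])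
  have lJ: "l2 (J \<phi>)" by (rule fin_supp_l2[OF fin_supp_J[OF f]])
  have l\<alpha>: "l2 \<alpha>" unfolding \<alpha>_def by (rule l2_diff[OF lJ l2_scale[OF l\<phi>]])
  have l\<beta>: "l2 \<beta>" unfolding \<beta>_def by (rule l2_scale[OF l\<phi>])
  have hz: "z = complex_of_real a + \<i> * complex_of_real b" by (simp add: a_def b_def complex_eq_iff)
  have Kdec: "K z \<phi> = (\<lambda>x. \<alpha> x - \<beta> x)"
    unfolding K_def \<alpha>_def \<beta>_def by (rule ext) (subst hz, simp add: algebra_simps)
  have lK: "l2 (K z \<phi>)" by (rule fin_supp_l2[OF fin_supp_K[OF f]])
  have nK: "l2_norm (K z \<phi>) = norm (Abs_ell2 \<alpha> - Abs_ell2 \<beta>)"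
    by (simp add: Kdec norm_Abs_diff l\<alpha> l\<beta>)
  have s_real: "Im (l2_inner (J \<phi>) \<phi>) = 0"
  proof -
    have "l2_inner (J \<phi>) \<phi> = cnj (l2_inner (J \<phi>) \<phi>)"
      using L_sym[OF f, of \<phi>] inner_conj[of \<phi> "J \<phi>"] by simp
    thus ?thesis by (simp add: complex_eq_iff)
  qed
  have p_real: "Im (l2_inner \<phi> \<phi>) = 0"
    by (simp add: l2_inner_def l2_self)
  have t: "l2_inner \<alpha> \<phi> = l2_inner (J \<phi>) \<phi> - complex_of_real a * l2_inner \<phi> \<phi>"
    unfolding \<alpha>_def by (simp add: inner_diff_l2 inner_scale_left lJ l\<phi> l2_scale)
  have t_real: "Im (l2_inner \<alpha> \<phi>) = 0" unfolding t using s_real p_real by simp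
  have inn: "inner (Abs_ell2 \<alpha>) (Abs_ell2 \<beta>) = 0"
  proof -
    have "inner (Abs_ell2 \<alpha>) (Abs_ell2 \<beta>) = Re (l2_inner \<alpha> \<beta>)" by (rule inner_ell2_Abs[OF l\<alpha> l\<beta>])
    also have "l2_inner \<alpha> \<beta> = cnj (\<i> * complex_of_real b) * l2_inner \<alpha> \<phi>"
      unfolding \<beta>_def by (rule inner_scale_right[OF l\<alpha> l\<phi>])
    finally show ?thesis using t_real by simp
  qed
  have nb: "norm (Abs_ell2 \<beta>) = \<bar>b\<bar> * l2_norm \<phi>"
    by (simp add: norm_ell2_Abs l\<beta>, simp add: \<beta>_def l2_norm_scale norm_mult)
  have "(l2_norm (K z \<phi>))\<^sup>2 = (norm (Abs_ell2 \<alpha>))\<^sup>2 + (\<bar>b\<bar> * l2_norm \<phi>)\<^sup>2"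
    unfolding nK norm_diff_sq inn nb by simp
  hence "(\<bar>b\<bar> * l2_norm \<phi>)\<^sup>2 \<le> (l2_norm (K z \<phi>))\<^sup>2" by simp
  hence "\<bar>b\<bar> * l2_norm \<phi> \<le> l2_norm (K z \<phi>)"
    by (rule power2_le_imp_le) (rule l2_norm_nonneg)
  thus ?thesis by (simp add: b_def)
qed

lemma density:
  assumes hv: "\<And>x. J v x = z * v x" and z: "Im z \<noteq> 0" and v: "v \<noteq> (\<lambda>_. 0)" and nl: "\<not> l2 v"
    and g: "l2 g"
  shows "\<exists>\<phi>s. (\<forall>n. fin_supp (\<phi>s n)) \<and> (\<lambda>n. l2_norm (\<lambda>x. K z (\<phi>s n) x - g x)) \<longlonglongrightarrow> 0"
proof -
  define WW where "WW = {Abs_ell2 (K z \<phi>) | \<phi>. fin_supp \<phi>}"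
  have "Abs_ell2 (K z (\<lambda>_. 0)) = 0" by (simp add: K_zero Abs_zero)
  hence W0: "0 \<in> WW" unfolding WW_def using fin_supp_zero by force
  have Wadd: "x + y \<in> WW" if xyW: "x \<in> WW" "y \<in> WW" for x y
  proof -
    obtain \<phi> \<psi> where p: "fin_supp \<phi>" "x = Abs_ell2 (K z \<phi>)" "fin_supp \<psi>" "y = Abs_ell2 (K z \<psi>)"
      using xyW unfolding WW_def by blast
    have "x + y = Abs_ell2 (K z (\<lambda>x. \<phi> x + \<psi> x))"
      unfolding p K_add by (rule Abs_plus) (auto intro: fin_supp_l2 fin_supp_K p)
    thus ?thesis unfolding WW_def using fin_supp_add[OF p(1) p(3)] by blast
  qed
  have Wscale: "c *\<^sub>R x \<in> WW" if xW: "x \<in> WW" for c x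
  proof -
    obtain \<phi> where p: "fin_supp \<phi>" "x = Abs_ell2 (K z \<phi>)"
      using xW unfolding WW_def by blast
    have "c *\<^sub>R x = Abs_ell2 (K z (\<lambda>x. complex_of_real c * \<phi> x))"
      unfolding p K_scale by (rule Abs_scaleR) (auto intro: fin_supp_l2 fin_supp_K p)
    thus ?thesis unfolding WW_def using fin_supp_scale[OF p(1)] by blast
  qed
  have orth: "r = 0" if r: "\<forall>w\<in>WW. inner r w = 0" for r
  proof -
    define \<rho> where "\<rho> = Rep_ell2 r"
    have l\<rho>: "l2 \<rho>" unfolding \<rho>_def by (rule Rep_l2)
    have q0: "J \<rho> x = cnj z * \<rho> x" for x
    proof -
      have val: "Re (c * cnj (J \<rho> x - cnj z * \<rho> x)) = 0" for c
      proof -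
        have ld: "l2 (dl x c)" by (rule fin_supp_l2[OF fin_supp_dl])
        have lJd: "l2 (J (dl x c))" by (rule fin_supp_l2[OF fin_supp_J[OF fin_supp_dl]])
        have lK: "l2 (K z (dl x c))" by (rule fin_supp_l2[OF fin_supp_K[OF fin_supp_dl]])
        have "Abs_ell2 (K z (dl x c)) \<in> WW" unfolding WW_def using fin_supp_dl[of x c] by auto
        hence "inner r (Abs_ell2 (K z (dl x c))) = 0" by (rule r[rule_format])
        hence "Re (l2_inner \<rho> (K z (dl x c))) = 0"
          using inner_ell2_Abs[OF l\<rho> lK] by (simp add: \<rho>_def Rep_ell2_inverse)
        hence "Re (l2_inner (K z (dl x c)) \<rho>) = 0"
          using inner_conj[of \<rho> "K z (dl x c)"] by simp
        moreover have "l2_inner (K z (dl x c)) \<rho> = c * cnj (J \<rho> x) - z * (c * cnj (\<rho> x))"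
          unfolding K_def by (simp add: inner_diff_l2 inner_scale_left l2_scale ld lJd l\<rho> inner_J_dl inner_dl)
        ultimately show ?thesis by (simp add: algebra_simps)
      qed
      have "Re (cnj (J \<rho> x - cnj z * \<rho> x)) = 0" using val[of 1] by simp
      moreover have "Re (\<i> * cnj (J \<rho> x - cnj z * \<rho> x)) = 0" using val[of \<i>] by simp
      ultimately have "J \<rho> x - cnj z * \<rho> x = 0" by (simp add: complex_eq_iff)
      thus ?thesis by simp
    qed
    define \<sigma> where "\<sigma> = (\<lambda>x. cnj (\<rho> x))"
    have hs: "J \<sigma> x = z * \<sigma> x" for x unfolding \<sigma>_def J_cnj q0 by simp
    have "\<sigma> = (\<lambda>_. 0)" by (rule kernel_trivial[OF hs hv z v nl]) (simp add: \<sigma>_def l2_cnj l\<rho>)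
    hence "\<rho> = (\<lambda>_. 0)" unfolding \<sigma>_def by (metis complex_cnj_zero_iff)
    hence "Rep_ell2 r = Rep_ell2 0" by (simp add: \<rho>_def zero_ell2.rep_eq)
    thus ?thesis by (simp add: Rep_ell2_inject)
  qed
  have "Abs_ell2 g \<in> closure WW"
    by (rule dense_of_orth[OF W0 Wadd Wscale orth]) auto
  then obtain Y where Y: "\<And>n. Y n \<in> WW" and Yl: "Y \<longlonglongrightarrow> Abs_ell2 g"
    unfolding closure_sequential by blast
  have "\<forall>n. \<exists>\<phi>. fin_supp \<phi> \<and> Y n = Abs_ell2 (K z \<phi>)" using Y unfolding WW_def by blast
  then obtain \<phi>s where \<phi>s: "\<And>n. fin_supp (\<phi>s n)" "\<And>n. Y n = Abs_ell2 (K z (\<phi>s n))"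
    by metis
  have Yeq: "(\<lambda>n. Abs_ell2 (K z (\<phi>s n))) = Y" by (rule ext) (simp add: \<phi>s(2))
  have "(\<lambda>n. l2_norm (\<lambda>x. K z (\<phi>s n) x - g x)) \<longlonglongrightarrow> 0"
  proof (rule tendsto_l2[OF _ g])
    show "l2 (K z (\<phi>s n))" for n by (rule fin_supp_l2[OF fin_supp_K[OF \<phi>s(1)]])
    show "(\<lambda>n. Abs_ell2 (K z (\<phi>s n))) \<longlonglongrightarrow> Abs_ell2 g" unfolding Yeq by (rule Yl)
  qed
  thus ?thesis using \<phi>s(1) by blast
qed

end

context jtree
begin

lemma surj:
  assumes hv: "\<And>x. J v x = z * v x" and z: "Im z \<noteq> 0" and v: "v \<noteq> (\<lambda>_. 0)" and nl: "\<not> l2 v"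
    and g: "l2 g"
  shows "\<exists>f w'. (f, w') \<in> op_closure GG \<and> (\<forall>x. w' x = g x + z * f x)"
proof -
  obtain \<phi>s where fs: "\<And>n. fin_supp (\<phi>s n)"
    and lim: "(\<lambda>n. l2_norm (\<lambda>x. K z (\<phi>s n) x - g x)) \<longlonglongrightarrow> 0"
    using density[OF hv z v nl g] by blast
  have l\<phi>: "l2 (\<phi>s n)" for n by (rule fin_supp_l2[OF fs])
  have lK: "l2 (K z (\<phi>s n))" for n by (rule fin_supp_l2[OF fin_supp_K[OF fs]])
  define b where "b = \<bar>Im z\<bar>"
  have b: "b > 0" using z by (simp add: b_def)
  have dbound: "b * l2_norm (\<lambda>x. \<phi>s m x - \<phi>s n x)
      \<le> l2_norm (\<lambda>x. K z (\<phi>s m) x - g x) + l2_norm (\<lambda>x. K z (\<phi>s n) x - g x)" for m n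
  proof -
    have fd: "fin_supp (\<lambda>x. \<phi>s m x - \<phi>s n x)" by (rule fin_supp_diff[OF fs fs])
    have "b * l2_norm (\<lambda>x. \<phi>s m x - \<phi>s n x) \<le> l2_norm (K z (\<lambda>x. \<phi>s m x - \<phi>s n x))"
      unfolding b_def by (rule lower_bound[OF fd])
    also have "K z (\<lambda>x. \<phi>s m x - \<phi>s n x)
        = (\<lambda>x. (K z (\<phi>s m) x - g x) + (-1) * (K z (\<phi>s n) x - g x))"
      unfolding K_diff by (rule ext) simp
    also have "l2_norm \<dots> \<le> l2_norm (\<lambda>x. K z (\<phi>s m) x - g x) + l2_norm (\<lambda>x. (-1) * (K z (\<phi>s n) x - g x))"
      by (rule l2_norm_triangle[OF l2_diff[OF lK g] l2_scale[OF l2_diff[OF lK g]]])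
    also have "l2_norm (\<lambda>x. (-1) * (K z (\<phi>s n) x - g x)) = l2_norm (\<lambda>x. K z (\<phi>s n) x - g x)"
      by (simp only: l2_norm_scale) simp
    finally show ?thesis .
  qed
  have "Cauchy (\<lambda>n. Abs_ell2 (\<phi>s n))"
  proof (rule metric_CauchyI)
    fix e :: real assume e: "e > 0"
    have eb: "e * b / 2 > 0" using e b by simp
    obtain M where M0: "\<forall>n\<ge>M. norm (l2_norm (\<lambda>x. K z (\<phi>s n) x - g x) - 0) < e * b / 2"
      using LIMSEQ_D[OF lim eb] by blast
    have M: "l2_norm (\<lambda>x. K z (\<phi>s n) x - g x) < e * b / 2" if "n \<ge> M" for n
    proof -
      have "norm (l2_norm (\<lambda>x. K z (\<phi>s n) x - g x) - 0) < e * b / 2" using M0 that by blast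
      moreover have "l2_norm (\<lambda>x. K z (\<phi>s n) x - g x) \<ge> 0" by (rule l2_norm_nonneg)
      ultimately show ?thesis by (simp only: diff_zero real_norm_def abs_of_nonneg)
    qed
    have "dist (Abs_ell2 (\<phi>s m)) (Abs_ell2 (\<phi>s n)) < e" if "m \<ge> M" "n \<ge> M" for m n
    proof -
      have s2: "l2_norm (\<lambda>x. K z (\<phi>s m) x - g x) + l2_norm (\<lambda>x. K z (\<phi>s n) x - g x)
          < e * b / 2 + e * b / 2" by (rule add_strict_mono[OF M[OF that(1)] M[OF that(2)]])
      have "b * l2_norm (\<lambda>x. \<phi>s m x - \<phi>s n x) < e * b / 2 + e * b / 2"
        by (rule order_le_less_trans[OF dbound[of m n] s2])
      hence "b * l2_norm (\<lambda>x. \<phi>s m x - \<phi>s n x) < b * e" by (simp add: mult.commute)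
      hence "l2_norm (\<lambda>x. \<phi>s m x - \<phi>s n x) < e" using b by (simp add: mult_less_cancel_left_pos)
      thus ?thesis by (simp add: dist_norm norm_Abs_diff l\<phi>)
    qed
    thus "\<exists>M. \<forall>m\<ge>M. \<forall>n\<ge>M. dist (Abs_ell2 (\<phi>s m)) (Abs_ell2 (\<phi>s n)) < e" by blast
  qed
  then obtain F0 where F0: "(\<lambda>n. Abs_ell2 (\<phi>s n)) \<longlonglongrightarrow> F0"
    using Cauchy_convergent_iff convergent_def by blast
  define f where "f = Rep_ell2 F0"
  have lf: "l2 f" unfolding f_def by (rule Rep_l2)
  have F0f: "F0 = Abs_ell2 f" by (simp add: f_def Rep_ell2_inverse)
  have limf: "(\<lambda>n. l2_norm (\<lambda>x. \<phi>s n x - f x)) \<longlonglongrightarrow> 0"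
    by (rule tendsto_l2[OF l\<phi> lf]) (use F0 F0f in simp)
  define w' where "w' = (\<lambda>x. g x + z * f x)"
  have lw': "l2 w'" unfolding w'_def by (rule l2_add[OF g l2_scale[OF lf]])
  have limw: "(\<lambda>n. l2_norm (\<lambda>x. J (\<phi>s n) x - w' x)) \<longlonglongrightarrow> 0"
  proof (rule Lim_null_comparison)
    show "\<forall>\<^sub>F n in sequentially. norm (l2_norm (\<lambda>x. J (\<phi>s n) x - w' x))
        \<le> l2_norm (\<lambda>x. K z (\<phi>s n) x - g x) + cmod z * l2_norm (\<lambda>x. \<phi>s n x - f x)"
    proof (rule always_eventually, rule allI)
      fix n
      have eq: "(\<lambda>x. J (\<phi>s n) x - w' x) = (\<lambda>x. (K z (\<phi>s n) x - g x) + z * (\<phi>s n x - f x))"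
        unfolding K_def w'_def by (rule ext) (simp add: algebra_simps)
      have "l2_norm (\<lambda>x. J (\<phi>s n) x - w' x)
          \<le> l2_norm (\<lambda>x. K z (\<phi>s n) x - g x) + l2_norm (\<lambda>x. z * (\<phi>s n x - f x))"
        unfolding eq by (rule l2_norm_triangle[OF l2_diff[OF lK g] l2_scale[OF l2_diff[OF l\<phi> lf]]])
      thus "norm (l2_norm (\<lambda>x. J (\<phi>s n) x - w' x))
          \<le> l2_norm (\<lambda>x. K z (\<phi>s n) x - g x) + cmod z * l2_norm (\<lambda>x. \<phi>s n x - f x)"
        using l2_norm_nonneg[of "\<lambda>x. J (\<phi>s n) x - w' x"] by (simp add: l2_norm_scale)
    qed
    show "(\<lambda>n. l2_norm (\<lambda>x. K z (\<phi>s n) x - g x) + cmod z * l2_norm (\<lambda>x. \<phi>s n x - f x)) \<longlonglongrightarrow> 0"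
      using tendsto_add[OF lim tendsto_mult[OF tendsto_const[of "cmod z"] limf]] by simp
  qed
  have "(f, w') \<in> op_closure GG" by (rule closure_I[OF lf lw' fs limf limw])
  thus ?thesis unfolding w'_def by blast
qed

lemma dir2:
  assumes hv: "\<And>x. J v x = z * v x" and z: "Im z \<noteq> 0" and v: "v \<noteq> (\<lambda>_. 0)" and nl: "\<not> l2 v"
  shows "self_adjoint_op (op_closure GG)"
  unfolding self_adjoint_op_def
proof
  show "op_closure GG \<subseteq> op_adjoint (op_closure GG)" by (rule C_sub_A)
  show "op_adjoint (op_closure GG) \<subseteq> op_closure GG"
  proof
    fix p assume p: "p \<in> op_adjoint (op_closure GG)"
    obtain u w where uw: "p = (u, w)" by (cases p)
    have p': "(u, w) \<in> op_adjoint (op_closure GG)" using p uw by simp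
    have lu: "l2 u" and lw: "l2 w" using p' unfolding op_adjoint_def by auto
    have wJ: "w x = J u x" for x by (rule A_pointwise[OF p'])
    define g where "g = (\<lambda>x. w x - z * u x)"
    have lg: "l2 g" unfolding g_def by (rule l2_diff[OF lw l2_scale[OF lu]])
    obtain f w' where fw: "(f, w') \<in> op_closure GG" and w'e: "\<And>x. w' x = g x + z * f x"
      using surj[OF hv z v nl lg] by blast
    have lf: "l2 f" by (rule closure_E(1)[OF fw])
    have w'J: "w' x = J f x" for x by (rule C_pointwise[OF fw])
    define d where "d = (\<lambda>x. u x - f x)"
    have ld: "l2 d" unfolding d_def by (rule l2_diff[OF lu lf])
    have hd: "J d x = z * d x" for x
    proof -
      have "J d x = J u x - J f x" unfolding d_def by (rule J_diff)
      also have "\<dots> = w x - w' x" using wJ[of x] w'J[of x] by simp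
      also have "\<dots> = z * d x" using w'e[of x] by (simp add: g_def d_def algebra_simps)
      finally show ?thesis .
    qed
    have d0: "d = (\<lambda>_. 0)" by (rule kernel_trivial[OF hd hv z v nl ld])
    have "u x = f x" for x
    proof -
      have "d x = 0" using d0 by simp
      thus ?thesis by (simp add: d_def)
    qed
    hence uf: "u = f" by (rule ext)
    have "w x = w' x" for x by (simp add: wJ w'J uf)
    hence "w = w'" by (rule ext)
    thus "p \<in> op_closure GG" using fw uf uw by simp
  qed
qed

end

theorem corollary4:
  fixes par :: "'a \<Rightarrow> 'a" and lev :: "'a \<Rightarrow> nat"
    and lam bet :: "'a \<Rightarrow> real" and z :: complex and v :: "'a \<Rightarrow> complex"
  assumes "level_tree par lev"
    and "\<And>x. lam x > 0"
    and "Im z \<noteq> 0"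
    and "v \<noteq> (\<lambda>_. 0)"
    and "\<And>x. jacobi par lam bet v x = z * v x"
  shows "ess_self_adjoint (jacobi_graph par lam bet) \<longleftrightarrow> \<not> l2 v"
proof -
  interpret jtree par lev lam bet using assms(1,2) by unfold_locales
  show ?thesis
  proof (cases "l2 v")
    case True
    thus ?thesis using dir1[OF assms(5) assms(3) assms(4) True] unfolding ess_self_adjoint_def by simp
  next
    case False
    thus ?thesis using dir2[OF assms(5) assms(3) assms(4) False] unfolding ess_self_adjoint_def by simp
  qed
qed


end
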